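(* Let $k\ge3$ be odd and let $(w_1,w_2)$ be a weak CLT pair with $w_1,w_2\in\mathcal V_k$ and $\mathrm{wt}((w_1,w_2))=k$. Then: (i) each $w_i$ ($i=1,2$) satisfies $N^{w_i}_{\{1,1\}}=1$ and $\check w_i$ is a Wigner word of length $k$; (ii) $\mathrm{supp}(w_1)\cap\mathrm{supp}(w_2)=\{1\}$; (iii) $\mathbb{E}[\bar T_{w_1}\bar T_{w_2}]=\mathbb{E}[\xi_{11}^2]$; (iv) summing over a set of representatives of equivalence classes of all such pairs, $\sum_{(w_1,w_2)}\mathbb{E}[\bar T_{w_1}\bar T_{w_2}]=a_k^2\,\mathbb{E}[\xi_{11}^2]$.
   Context: $\{\xi_{ij}\}_{1\le i\le j}$ independent real random variables; $\{\xi_{ii}\}$ i.i.d. with mean zero, all moments finite; $\{\xi_{ij}\}_{i<j}$ i.i.d. with mean zero, $\mathbb{E}[\xi_{12}^2]=1$, all moments finite; $\xi_e=\xi_{\min(i,j),\max(i,j)}$ for $e=\{i,j\}$. A word is a finite sequence $w=(s_1,\dots,s_m)$ of positive integers; $\ell(w)=m$; closed if $s_1=s_m$; $\mathrm{supp}(w)$ its letter set; $E_w=\{\{s_i,s_{i+1}\}:1\le i\le m-1\}$ (undirected; self edge $\{u,u\}$); $N_e^w=\#\{i\le m-1:\{s_i,s_{i+1}\}=e\}$. For $a=(w_1,w_2)$: $\mathrm{wt}(a)=\#(\mathrm{supp}(w_1)\cup\mathrm{supp}(w_2))$, $E_a=E_{w_1}\cup E_{w_2}$, $N_e^a=N_e^{w_1}+N_e^{w_2}$;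 equivalence = bijection of supports mapping one to the other letter by letter. Weak CLT pair: $N_e^a\ge2$ for all $e\in E_a$ and $E_{w_1}\cap E_{w_2}\ne\emptyset$. $\mathcal V_k$ = closed words of length $k+1$ with first letter $1$ having at least one self edge. $\check w$ is obtained from $w$ by deleting each letter equal to its predecessor. A Wigner word is a closed word $w$ with $N_e^w\ge2$ for all $e\in E_w$ and $\mathrm{wt}(w)=(\ell(w)+1)/2$ (single-letter words are also Wigner words). $T_w=\prod_{e\in E_w}\xi_e^{N_e^w}$, $\bar T_w=T_w-\mathbb{E}T_w$. For odd $k$, $a_k$ is the number of equivalence classes of closed words $w$ of length $k+1$ starting at $1$ with $N^w_{\{1,1\}}=1$ and $\check w$ a Wigner word of length $k$. *)

theory Defs
  imports "HOL-Probability.Probability"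
begin

text \<open>Words are lists of positive integers (naturals >= 1).
  Edges are undirected, represented as sets of letters: the edge between u and v is {u,v};
  a self edge is {u,u} = {u}.\<close>

definition is_word :: "nat list \<Rightarrow> bool" where
  "is_word w \<longleftrightarrow> (\<forall>x\<in>set w. 0 < x)"

definition closed_word :: "nat list \<Rightarrow> bool" where
  "closed_word w \<longleftrightarrow> w \<noteq> [] \<and> hd w = last w"

definition supp :: "nat list \<Rightarrow> nat set" where
  "supp w = set w"

definition edges :: "nat list \<Rightarrow> nat set set" where
  "edges w = {{w ! i, w ! (Suc i)} | i. Suc i < length w}"

definition Nedge :: "nat set \<Rightarrow> nat list \<Rightarrow> nat" where
  "Nedge e w = card {i. Suc i < length w \<and> {w ! i, w ! (Suc i)} = e}"

definition wt_pair :: "nat list \<times> nat list \<Rightarrow> nat" where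
  "wt_pair a = card (supp (fst a) \<union> supp (snd a))"

definition edges_pair :: "nat list \<times> nat list \<Rightarrow> nat set set" where
  "edges_pair a = edges (fst a) \<union> edges (snd a)"

definition Nedge_pair :: "nat set \<Rightarrow> nat list \<times> nat list \<Rightarrow> nat" where
  "Nedge_pair e a = Nedge e (fst a) + Nedge e (snd a)"

definition word_equiv :: "nat list \<Rightarrow> nat list \<Rightarrow> bool" where
  "word_equiv w v \<longleftrightarrow> (\<exists>f. bij_betw f (supp w) (supp v) \<and> map f w = v)"

definition pair_equiv :: "nat list \<times> nat list \<Rightarrow> nat list \<times> nat list \<Rightarrow> bool" where
  "pair_equiv a b \<longleftrightarrow> (\<exists>f. bij_betw f (supp (fst a) \<union> supp (snd a)) (supp (fst b) \<union> supp (snd b))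
       \<and> map f (fst a) = fst b \<and> map f (snd a) = snd b)"

definition weak_CLT_pair :: "nat list \<times> nat list \<Rightarrow> bool" where
  "weak_CLT_pair a \<longleftrightarrow> (\<forall>e\<in>edges_pair a. 2 \<le> Nedge_pair e a)
       \<and> edges (fst a) \<inter> edges (snd a) \<noteq> {}"

definition V :: "nat \<Rightarrow> nat list set" where
  "V k = {w. is_word w \<and> closed_word w \<and> length w = k + 1 \<and> hd w = 1
             \<and> (\<exists>u. {u} \<in> edges w)}"

definition check :: "nat list \<Rightarrow> nat list" where
  "check w = remdups_adj w"

definition wigner_word :: "nat list \<Rightarrow> bool" where
  "wigner_word w \<longleftrightarrow> is_word w \<and> closed_word w \<and> (\<forall>e\<in>edges w. 2 \<le> Nedge e w)
       \<and> 2 * card (supp w) = length w + 1"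

definition a_set :: "nat \<Rightarrow> nat list set" where
  "a_set k = {w. is_word w \<and> closed_word w \<and> length w = k + 1 \<and> hd w = 1
                 \<and> Nedge {1} w = 1 \<and> wigner_word (check w) \<and> length (check w) = k}"

definition a_num :: "nat \<Rightarrow> nat" where
  "a_num k = card (a_set k // {(w, v). word_equiv w v})"

definition xi :: "(nat \<Rightarrow> nat \<Rightarrow> 'a \<Rightarrow> real) \<Rightarrow> nat set \<Rightarrow> 'a \<Rightarrow> real" where
  "xi X e = X (Min e) (Max e)"

definition T :: "(nat \<Rightarrow> nat \<Rightarrow> 'a \<Rightarrow> real) \<Rightarrow> nat list \<Rightarrow> 'a \<Rightarrow> real" where
  "T X w = (\<lambda>\<omega>. \<Prod>e\<in>edges w. xi X e \<omega> ^ Nedge e w)"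

definition Tbar :: "'a measure \<Rightarrow> (nat \<Rightarrow> nat \<Rightarrow> 'a \<Rightarrow> real) \<Rightarrow> nat list \<Rightarrow> 'a \<Rightarrow> real" where
  "Tbar M X w = (\<lambda>\<omega>. T X w \<omega> - integral\<^sup>L M (T X w))"

definition good_pair :: "nat \<Rightarrow> nat list \<times> nat list \<Rightarrow> bool" where
  "good_pair k a \<longleftrightarrow> weak_CLT_pair a \<and> fst a \<in> V k \<and> snd a \<in> V k \<and> wt_pair a = k"

end

theory Submission
  imports Defs
begin


fun el :: "nat list \<Rightarrow> nat set list" where
  "el (a # b # xs) = {a, b} # el (b # xs)"
| "el _ = []"

definition isloop :: "nat set \<Rightarrow> bool" where
  "isloop e \<longleftrightarrow> (\<exists>u. e = {u})"

definition nl :: "nat set set \<Rightarrow> nat set set" where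
  "nl A = {e\<in>A. \<not> isloop e}"

lemma el_length: "length (el w) = length w - 1"
  by (induction w rule: el.induct) auto

lemma el_nth: "Suc i < length w \<Longrightarrow> el w ! i = {w ! i, w ! Suc i}"
proof (induction w arbitrary: i rule: el.induct)
  case (1 a b xs)
  then show ?case by (cases i) auto
qed auto

lemma edges_el: "edges w = set (el w)"
proof -
  have "set (el w) = {el w ! i | i. i < length (el w)}" by (simp add: set_conv_nth)
  also have "\<dots> = {{w ! i, w ! Suc i} | i. Suc i < length w}"
    unfolding el_length using el_nth by (metis less_diff_conv Suc_eq_plus1)
  finally show ?thesis unfolding edges_def by simp
qed

lemma Nedge_el: "Nedge e w = count_list (el w) e"
  unfolding Nedge_def count_list_eq_length_filter length_filter_conv_card el_length
  by (rule arg_cong[where f=card]) (auto simp: el_nth)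

lemma el_snoc: "el (xs @ [a]) = el xs @ (if xs = [] then [] else [{last xs, a}])"
  by (induction xs rule: el.induct) auto

lemma el_rev: "el (rev w) = rev (el w)"
proof (induction w rule: el.induct)
  case (1 a b xs)
  have "rev (a # b # xs) = rev (b # xs) @ [a]" by simp
  then have "el (rev (a # b # xs)) = el (rev (b # xs)) @ [{b, a}]"
    by (simp only: el_snoc) simp
  then show ?case using 1 by (simp add: insert_commute)
qed auto

lemma el_remdups: "el (remdups_adj w) = filter (\<lambda>e. \<not> isloop e) (el w)"
proof (induction w rule: remdups_adj.induct)
  case (3 x y xs)
  show ?case
  proof (cases "x = y")
    case True
    then show ?thesis using 3 by (simp add: isloop_def)
  next
    case False
    have "remdups_adj (y # xs) = y # tl (remdups_adj (y # xs))" by simp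
    then have "el (x # remdups_adj (y # xs)) = {x, y} # el (remdups_adj (y # xs))"
      by (metis el.simps(1))
    then show ?thesis using 3 False by (simp add: isloop_def doubleton_eq_iff)
  qed
qed auto

lemma el_split: "el w = xs @ z # ys \<Longrightarrow> \<exists>p q. w = p @ q \<and> p \<noteq> [] \<and> q \<noteq> [] \<and> el p = xs \<and> el q = ys"
proof (induction xs arbitrary: w)
  case Nil
  then obtain a b r where w: "w = a # b # r" by (cases w rule: el.cases) auto
  then show ?case using Nil by (intro exI[of _ "[a]"] exI[of _ "b # r"]) auto
next
  case (Cons x xs)
  then obtain a b r where w: "w = a # b # r" by (cases w rule: el.cases) auto
  with Cons.prems have "el (b # r) = xs @ z # ys" by simp
  from Cons.IH[OF this] obtain p q where pq: "b # r = p @ q" "p \<noteq> []" "q \<noteq> []" "el p = xs" "el q = ys" by blast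
  then obtain p' where p': "p = b # p'" by (cases p) auto
  have "el (a # p) = {a, b} # el p" using p' by simp
  moreover have "x = {a, b}" using Cons.prems w by simp
  ultimately show ?case using w pq by (intro exI[of _ "a # p"] exI[of _ q]) auto
qed

lemma walk_card:
  assumes "finite S" "finite F" "w \<noteq> []" "hd w \<in> S" "card S \<le> card F + 1" "\<forall>e\<in>F. e \<subseteq> S"
  shows "card (S \<union> set w) \<le> card (F \<union> nl (set (el w))) + 1 \<and> (\<forall>e\<in>F \<union> nl (set (el w)). e \<subseteq> S \<union> set w)"
  using assms
proof (induction w arbitrary: S F rule: el.induct)
  case (1 a b xs)
  define S' where "S' = insert b S"
  define F' where "F' = F \<union> nl {{a, b}}"
  have a: "a \<in> S" using 1 by simp
  have c1: "card S' \<le> card F' + 1"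
  proof (cases "b \<in> S")
    case True
    then have "S' = S" by (auto simp: S'_def)
    moreover have "card F \<le> card F'" unfolding F'_def using 1 by (intro card_mono) (auto simp: nl_def)
    ultimately show ?thesis using 1 by simp
  next
    case False
    then have ab: "a \<noteq> b" using a by auto
    then have "F' = insert {a, b} F" by (auto simp: F'_def nl_def isloop_def doubleton_eq_iff)
    moreover have "{a, b} \<notin> F" using False 1 by auto
    ultimately have "card F' = card F + 1" using 1 by simp
    moreover have "card S' = card S + 1" using False 1 by (simp add: S'_def)
    ultimately show ?thesis using 1 by simp
  qed
  have c2: "\<forall>e\<in>F'. e \<subseteq> S'" using 1 a by (auto simp: F'_def S'_def nl_def)
  have "card (S' \<union> set (b # xs)) \<le> card (F' \<union> nl (set (el (b # xs)))) + 1 \<and> (\<forall>e\<in>F' \<union> nl (set (el (b # xs))). e \<subseteq> S' \<union> set (b # xs))"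
    using 1 c1 c2 by (intro "1.IH") (auto simp: S'_def F'_def nl_def)
  moreover have "S' \<union> set (b # xs) = S \<union> set (a # b # xs)" using a by (auto simp: S'_def)
  moreover have "F' \<union> nl (set (el (b # xs))) = F \<union> nl (set (el (a # b # xs)))" by (auto simp: F'_def nl_def)
  ultimately show ?case by simp
next
  case ("2_2" v)
  then have "S \<union> set [v] = S" by auto
  then show ?case using "2_2" by (simp add: nl_def)
qed auto

definition winv :: "nat set \<Rightarrow> nat set set \<Rightarrow> bool" where
  "winv S F \<longleftrightarrow> finite S \<and> finite F \<and> card S \<le> card F + 1 \<and> (\<forall>e\<in>F. e \<subseteq> S)"

lemma nl_finite: "finite A \<Longrightarrow> finite (nl A)" by (simp add: nl_def)

lemma winv_step: "winv S F \<Longrightarrow> w \<noteq> [] \<Longrightarrow> hd w \<in> S \<Longrightarrow> winv (S \<union> set w) (F \<union> nl (set (el w)))"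
  unfolding winv_def using walk_card[of S F w] by (auto simp: nl_def)

lemma winv_init: "winv {1} {}" by (simp add: winv_def)

lemma el_subset: "e \<in> set (el w) \<Longrightarrow> e \<subseteq> set w"
  by (induction w rule: el.induct) auto

lemma nl_Un: "nl (A \<union> B) = nl A \<union> nl B" by (auto simp: nl_def)

lemma card_loops:
  assumes "finite E" shows "card E = card (nl E) + card {e\<in>E. isloop e}"
proof -
  have "E = nl E \<union> {e\<in>E. isloop e}" by (auto simp: nl_def)
  moreover have "nl E \<inter> {e\<in>E. isloop e} = {}" by (auto simp: nl_def)
  ultimately show ?thesis using assms card_Un_disjoint[of "nl E" "{e\<in>E. isloop e}"]
    by (metis (no_types, lifting) finite_Un)
qed

lemma sum_eq_2:
  fixes f :: "'b \<Rightarrow> nat"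
  assumes "finite A" "\<forall>x\<in>A. 2 \<le> f x" "sum f A \<le> 2 * card A"
  shows "\<forall>x\<in>A. f x = 2"
proof (rule ccontr)
  assume "\<not> ?thesis"
  then obtain a where "a \<in> A" "2 < f a" using assms(2) by force
  then have "sum (\<lambda>_. 2) A < sum f A" using assms by (intro sum_strict_mono_ex1) auto
  then show False using assms(3) by simp
qed



lemma good_struct:
  assumes g: "good_pair k (w1, w2)" and k3: "3 \<le> k"
  defines "L1 \<equiv> el w1" and "L2 \<equiv> el w2"
  shows "count_list L1 {1} = 1 \<and> count_list L2 {1} = 1 \<and> set w1 \<inter> set w2 = {1}
    \<and> (\<forall>e\<in>set L1. isloop e \<longrightarrow> e = {1}) \<and> (\<forall>e\<in>set L2. isloop e \<longrightarrow> e = {1})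
    \<and> (\<forall>e\<in>set L1. \<not> isloop e \<longrightarrow> count_list L1 e = 2 \<and> e \<notin> set L2)
    \<and> (\<forall>e\<in>set L2. \<not> isloop e \<longrightarrow> count_list L2 e = 2 \<and> e \<notin> set L1)
    \<and> 2 * card (set w1) = k + 1 \<and> 2 * card (set w2) = k + 1"
proof -
  define E where "E = set L1 \<union> set L2"
  define N where "N e = count_list L1 e + count_list L2 e" for e
  have w1V: "w1 \<in> V k" and w2V: "w2 \<in> V k" and wt: "card (set w1 \<union> set w2) = k"
    and clt: "weak_CLT_pair (w1, w2)"
    using g by (auto simp: good_pair_def wt_pair_def supp_def)
  have len1: "length L1 = k" and len2: "length L2 = k"
    using w1V w2V by (auto simp: V_def L1_def L2_def el_length)
  have hd1: "hd w1 = 1" "w1 \<noteq> []" "last w1 = 1" using w1V by (auto simp: V_def closed_word_def)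
  have hd2: "hd w2 = 1" "w2 \<noteq> []" "last w2 = 1" using w2V by (auto simp: V_def closed_word_def)
  have finE: "finite E" by (simp add: E_def)
  have N2: "\<forall>e\<in>E. 2 \<le> N e" using clt
    by (simp add: weak_CLT_pair_def edges_pair_def Nedge_pair_def edges_el Nedge_el E_def N_def L1_def L2_def)
  have sumN: "sum N E = 2 * k"
  proof -
    have "sum N E = sum (count_list L1) E + sum (count_list L2) E" by (simp add: N_def sum.distrib)
    also have "\<dots> = k + k" using len1 len2 finE by (simp add: sum_count_set E_def)
    finally show ?thesis by simp
  qed
  have "sum (\<lambda>_. 2) E \<le> sum N E" using N2 by (intro sum_mono) auto
  then have cardE: "card E \<le> k" using sumN by simp
  have one1: "1 \<in> set w1" using hd1 by (metis hd_in_set)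
  have one2: "1 \<in> set w2" using hd2 by (metis hd_in_set)
  have "winv ({1} \<union> set w1) ({} \<union> nl (set L1))"
    using winv_step[OF winv_init hd1(2)] hd1 by (simp add: L1_def)
  moreover have "{1} \<union> set w1 = set w1" using one1 by auto
  ultimately have wi1: "winv (set w1) (nl (set L1))" by simp
  have "winv (set w1 \<union> set w2) (nl (set L1) \<union> nl (set L2))"
    using winv_step[OF wi1 hd2(2)] hd2 one1 by (simp add: L2_def)
  then have "k \<le> card (nl E) + 1" using wt by (simp add: winv_def E_def nl_Un)
  moreover have cE: "card E = card (nl E) + card {e\<in>E. isloop e}" using finE card_loops by blast
  moreover obtain u where u1: "{u} \<in> set L1" using w1V by (auto simp: V_def edges_el L1_def)
  moreover obtain u' where u2: "{u'} \<in> set L2" using w2V by (auto simp: V_def edges_el L2_def)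
  ultimately have LPne: "{u} \<in> {e\<in>E. isloop e}" "{u'} \<in> {e\<in>E. isloop e}"
    by (auto simp: E_def isloop_def)
  have finLP: "finite {e\<in>E. isloop e}" using finE by simp
  have "card {e\<in>E. isloop e} \<ge> 1" using LPne finLP by (metis One_nat_def Suc_leI card_gt_0_iff empty_iff)
  with cE cardE \<open>k \<le> card (nl E) + 1\<close>
  have cLP: "card {e\<in>E. isloop e} = 1" and cnl: "card (nl E) = k - 1" and cE2: "card E = k" by linarith+
  have LPeq: "{e\<in>E. isloop e} = {{u}}"
    using cLP LPne(1) by (metis card_1_singletonE singletonD)
  then have uu: "u' = u" using LPne(2) by auto
  have Nall: "\<forall>e\<in>E. N e = 2" using sum_eq_2[OF finE N2] sumN cE2 by simp
  have loops1: "\<forall>e\<in>set L1. isloop e \<longrightarrow> e = {u}" using LPeq by (auto simp: E_def)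
  have loops2: "\<forall>e\<in>set L2. isloop e \<longrightarrow> e = {u}" using LPeq by (auto simp: E_def)
  have "count_list L1 {u} \<noteq> 0" "count_list L2 {u} \<noteq> 0"
    using u1 u2 uu by (auto simp: count_list_0_iff)
  moreover have "N {u} = 2" using Nall u1 by (auto simp: E_def)
  ultimately have cu1: "count_list L1 {u} = 1" and cu2: "count_list L2 {u} = 1" by (auto simp: N_def)
  have noshare: "\<not> (e \<in> set L1 \<and> e \<in> set L2)" if nle: "\<not> isloop e" for e
  proof
    assume sh: "e \<in> set L1 \<and> e \<in> set L2"
    then have "count_list L1 e \<noteq> 0" "count_list L2 e \<noteq> 0" by (auto simp: count_list_0_iff)
    moreover have "N e = 2" using Nall sh by (auto simp: E_def)
    ultimately have c1: "count_list L1 e = Suc 0" and c2: "count_list L2 e = Suc 0" by (auto simp: N_def)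
    obtain pr1 r1 where s1: "L1 = pr1 @ e # r1" "e \<notin> set pr1" "count_list r1 e = 0"
      using count_list_Suc_split_first[OF c1] by blast
    obtain pr2 r2 where s2: "L2 = pr2 @ e # r2" "e \<notin> set pr2" "count_list r2 e = 0"
      using count_list_Suc_split_first[OF c2] by blast
    obtain p1 q1 where pq1: "w1 = p1 @ q1" "p1 \<noteq> []" "q1 \<noteq> []" "el p1 = pr1" "el q1 = r1"
      using el_split s1(1) unfolding L1_def by blast
    obtain p2 q2 where pq2: "w2 = p2 @ q2" "p2 \<noteq> []" "q2 \<noteq> []" "el p2 = pr2" "el q2 = r2"
      using el_split s2(1) unfolding L2_def by blast
    have hp1: "hd p1 = 1" using pq1 hd1 by simp
    have hq1: "hd (rev q1) = 1" using pq1 hd1 by (simp add: hd_rev)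
    have hp2: "hd p2 = 1" using pq2 hd2 by simp
    have hq2: "hd (rev q2) = 1" using pq2 hd2 by (simp add: hd_rev)
    have i1: "winv ({1} \<union> set p1) ({} \<union> nl (set pr1))"
      using winv_step[OF winv_init pq1(2)] hp1 pq1 by simp
    have i2: "winv ({1} \<union> set p1 \<union> set (rev q1)) (({} \<union> nl (set pr1)) \<union> nl (set r1))"
      using winv_step[OF i1, of "rev q1"] hq1 pq1 by (simp add: el_rev)
    have i3: "winv ({1} \<union> set p1 \<union> set (rev q1) \<union> set p2) (({} \<union> nl (set pr1)) \<union> nl (set r1) \<union> nl (set pr2))"
      using winv_step[OF i2, of p2] hp2 pq2 by simp
    have i4: "winv ({1} \<union> set p1 \<union> set (rev q1) \<union> set p2 \<union> set (rev q2))
       (({} \<union> nl (set pr1)) \<union> nl (set r1) \<union> nl (set pr2) \<union> nl (set r2))"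
      using winv_step[OF i3, of "rev q2"] hq2 pq2 by (simp add: el_rev)
    have Seq: "{1} \<union> set p1 \<union> set (rev q1) \<union> set p2 \<union> set (rev q2) = set w1 \<union> set w2"
      using pq1 pq2 one1 by auto
    have Fsub: "({} \<union> nl (set pr1)) \<union> nl (set r1) \<union> nl (set pr2) \<union> nl (set r2) \<subseteq> nl E - {e}"
      using s1 s2 by (auto simp: nl_def E_def count_list_0_iff)
    have "card (({} \<union> nl (set pr1)) \<union> nl (set r1) \<union> nl (set pr2) \<union> nl (set r2)) \<le> card (nl E - {e})"
      using Fsub finE by (intro card_mono) (auto simp: nl_def)
    also have "\<dots> = k - 2" using cnl sh nle finE by (simp add: nl_def E_def)
    finally have cF: "card (({} \<union> nl (set pr1)) \<union> nl (set r1) \<union> nl (set pr2) \<union> nl (set r2)) \<le> k - 2" .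
    have "card ({1} \<union> set p1 \<union> set (rev q1) \<union> set p2 \<union> set (rev q2)) \<le>
       card (({} \<union> nl (set pr1)) \<union> nl (set r1) \<union> nl (set pr2) \<union> nl (set r2)) + 1"
      using i4 unfolding winv_def by blast
    then have "k \<le> k - 2 + 1" using Seq wt cF by simp
    then show False using k3 by simp
  qed
  have nlc1: "\<forall>e\<in>set L1. \<not> isloop e \<longrightarrow> count_list L1 e = 2 \<and> e \<notin> set L2"
  proof (intro ballI impI)
    fix e assume a: "e \<in> set L1" "\<not> isloop e"
    then have n: "e \<notin> set L2" using noshare[of e] by blast
    have "N e = 2" using Nall a by (auto simp: E_def)
    then show "count_list L1 e = 2 \<and> e \<notin> set L2" using n by (simp add: N_def)
  qed
  have nlc2: "\<forall>e\<in>set L2. \<not> isloop e \<longrightarrow> count_list L2 e = 2 \<and> e \<notin> set L1"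
  proof (intro ballI impI)
    fix e assume a: "e \<in> set L2" "\<not> isloop e"
    then have n: "e \<notin> set L1" using noshare[of e] by blast
    have "N e = 2" using Nall a by (auto simp: E_def)
    then show "count_list L2 e = 2 \<and> e \<notin> set L1" using n by (simp add: N_def)
  qed
  have kt1: "k = 1 + 2 * card (nl (set L1))"
  proof -
    have sL1: "set L1 = insert {u} (nl (set L1))"
    proof (intro equalityI subsetI)
      fix e assume e: "e \<in> set L1"
      show "e \<in> insert {u} (nl (set L1))"
      proof (cases "isloop e")
        case True then have "e = {u}" using loops1 e by blast
        then show ?thesis by simp
      next
        case False then show ?thesis using e by (simp add: nl_def)
      qed
    next
      fix e assume "e \<in> insert {u} (nl (set L1))" then show "e \<in> set L1" using u1 by (auto simp: nl_def)
    qed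
    have sL2: "{u} \<notin> nl (set L1)" by (simp add: nl_def isloop_def)
    note sL = sL1 sL2
    have "k = sum (count_list L1) (set L1)" using len1 by (simp add: sum_count_set)
    also have "\<dots> = count_list L1 {u} + sum (count_list L1) (nl (set L1))"
      by (subst sL(1), rule sum.insert) (use sL(2) in \<open>auto intro: nl_finite\<close>)
    also have "sum (count_list L1) (nl (set L1)) = sum (\<lambda>_. 2) (nl (set L1))"
      using nlc1 by (intro sum.cong) (auto simp: nl_def)
    finally show ?thesis using cu1 by simp
  qed
  have kt2: "k = 1 + 2 * card (nl (set L2))"
  proof -
    have sL1: "set L2 = insert {u} (nl (set L2))"
    proof (intro equalityI subsetI)
      fix e assume e: "e \<in> set L2"
      show "e \<in> insert {u} (nl (set L2))"
      proof (cases "isloop e")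
        case True then have "e = {u}" using loops2 e by blast
        then show ?thesis by simp
      next
        case False then show ?thesis using e by (simp add: nl_def)
      qed
    next
      fix e assume "e \<in> insert {u} (nl (set L2))" then show "e \<in> set L2" using u2 uu by (auto simp: nl_def)
    qed
    have sL2: "{u} \<notin> nl (set L2)" by (simp add: nl_def isloop_def)
    note sL = sL1 sL2
    have "k = sum (count_list L2) (set L2)" using len2 by (simp add: sum_count_set)
    also have "\<dots> = count_list L2 {u} + sum (count_list L2) (nl (set L2))"
      by (subst sL(1), rule sum.insert) (use sL(2) in \<open>auto intro: nl_finite\<close>)
    also have "sum (count_list L2) (nl (set L2)) = sum (\<lambda>_. 2) (nl (set L2))"
      using nlc2 by (intro sum.cong) (auto simp: nl_def)
    finally show ?thesis using cu2 by simp
  qed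
  have "winv ({1} \<union> set w2) ({} \<union> nl (set L2))"
    using winv_step[OF winv_init hd2(2)] hd2 by (simp add: L2_def)
  moreover have "{1} \<union> set w2 = set w2" using one2 by auto
  ultimately have wi2: "winv (set w2) (nl (set L2))" by simp
  have n1: "card (set w1) \<le> card (nl (set L1)) + 1" using wi1 by (simp add: winv_def)
  have n2: "card (set w2) \<le> card (nl (set L2)) + 1" using wi2 by (simp add: winv_def)
  have cUI: "card (set w1) + card (set w2) = k + card (set w1 \<inter> set w2)"
    using card_Un_Int[of "set w1" "set w2"] wt by simp
  have "1 \<in> set w1 \<inter> set w2" using one1 one2 by simp
  then have ci: "card (set w1 \<inter> set w2) \<ge> 1" by (metis One_nat_def Suc_leI card_gt_0_iff empty_iff finite_Int finite_set)
  have ci1: "card (set w1 \<inter> set w2) = 1" and ce1: "card (set w1) = card (nl (set L1)) + 1"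
    and ce2: "card (set w2) = card (nl (set L2)) + 1"
    using cUI n1 n2 kt1 kt2 ci by linarith+
  have inter: "set w1 \<inter> set w2 = {1}"
    using ci1 \<open>1 \<in> set w1 \<inter> set w2\<close> by (metis card_1_singletonE singletonD)
  have "u \<in> set w1" using u1 el_subset unfolding L1_def by blast
  moreover have "u \<in> set w2" using u2 uu el_subset unfolding L2_def by blast
  ultimately have u_1: "u = 1" using inter by blast
  have c1': "2 * card (set w1) = k + 1" using ce1 kt1 by linarith
  have c2': "2 * card (set w2) = k + 1" using ce2 kt2 by linarith
  have f: "count_list L1 {1} = 1" "count_list L2 {1} = 1" "\<forall>e\<in>set L1. isloop e \<longrightarrow> e = {1}"
    "\<forall>e\<in>set L2. isloop e \<longrightarrow> e = {1}"
    using cu1 cu2 loops1 loops2 u_1 by simp_all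
  show ?thesis using f inter nlc1 nlc2 c1' c2' by (intro conjI)
qed



lemma count_list_filter: "P x \<Longrightarrow> count_list (filter P xs) x = count_list xs x"
  by (induction xs) auto

lemma filter_loops:
  assumes "\<forall>e\<in>set xs. isloop e \<longrightarrow> e = {1}"
  shows "length (filter isloop xs) = count_list xs {1}"
proof -
  have "filter isloop xs = filter ((=) {1}) xs"
    using assms by (intro filter_cong) (auto simp: isloop_def)
  then show ?thesis by (simp add: count_list_eq_length_filter)
qed

lemma check_props:
  assumes iw: "is_word w" and cw: "closed_word w"
    and lp: "\<forall>e\<in>set (el w). isloop e \<longrightarrow> e = {1}" and c1: "count_list (el w) {1} = 1"
    and nlp: "\<forall>e\<in>set (el w). \<not> isloop e \<longrightarrow> count_list (el w) e = 2"
    and cs: "2 * card (set w) = length w"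
  shows "length (check w) = length w - 1 \<and> wigner_word (check w)"
proof -
  have elc: "el (check w) = filter (\<lambda>e. \<not> isloop e) (el w)" by (simp add: check_def el_remdups)
  have "length (filter isloop (el w)) = 1" using filter_loops[OF lp] c1 by simp
  then have A: "length (el (check w)) = length (el w) - 1"
    using sum_length_filter_compl[of isloop "el w"] elc by simp
  have B: "length (el w) \<ge> 1" using c1 by (metis count_le_length)
  have wne: "w \<noteq> []" using cw by (simp add: closed_word_def)
  have "check w \<noteq> []" using wne by (simp add: check_def)
  then have C: "length (check w) \<ge> 1" by (cases "check w") auto
  have len: "length (check w) = length w - 1" using A B C unfolding el_length by linarith
  have ne: "check w \<noteq> []" using wne by (simp add: check_def)
  have "wigner_word (check w)"
    unfolding wigner_word_def
  proof (intro conjI)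
    show "is_word (check w)" using iw by (simp add: is_word_def check_def)
    show "closed_word (check w)" using cw ne by (simp add: closed_word_def check_def)
    show "\<forall>e\<in>edges (check w). 2 \<le> Nedge e (check w)"
    proof
      fix e assume "e \<in> edges (check w)"
      then have e: "e \<in> set (el w)" "\<not> isloop e" by (auto simp: edges_el elc)
      then show "2 \<le> Nedge e (check w)" using nlp by (simp add: Nedge_el elc count_list_filter)
    qed
    show "2 * card (supp (check w)) = length (check w) + 1"
      using cs len wne by (simp add: supp_def check_def)
  qed
  with len show ?thesis by simp
qed

lemma aset_props:
  assumes "u \<in> a_set k"
  shows "(\<forall>e\<in>set (el u). isloop e \<longrightarrow> e = {1}) \<and> count_list (el u) {1} = 1
    \<and> (\<forall>e\<in>set (el u). \<not> isloop e \<longrightarrow> 2 \<le> count_list (el u) e) \<and> 2 * card (set u) = k + 1"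
proof -
  have u: "is_word u" "closed_word u" "length u = k + 1" "hd u = 1" "Nedge {1} u = 1"
    "wigner_word (check u)" "length (check u) = k"
    using assms by (auto simp: a_set_def)
  have c1: "count_list (el u) {1} = 1" using u(5) by (simp add: Nedge_el)
  have elc: "el (check u) = filter (\<lambda>e. \<not> isloop e) (el u)" by (simp add: check_def el_remdups)
  have "length (el (check u)) = k - 1" using u(7) by (simp add: el_length)
  moreover have "length (el u) = k" using u(3) by (simp add: el_length)
  moreover have "k \<ge> 1" using u(2,7) by (cases "u") (auto simp: check_def closed_word_def)
  ultimately have "length (filter isloop (el u)) = 1"
    using sum_length_filter_compl[of isloop "el u"] elc by simp
  then obtain x where fx: "filter isloop (el u) = [x]" by (cases "filter isloop (el u)") auto
  have "{1} \<in> set (el u)"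
  proof (rule ccontr)
    assume "{1} \<notin> set (el u)"
    then have "count_list (el u) {1} = 0" by simp
    with c1 show False by simp
  qed
  then have "{1} \<in> set (filter isloop (el u))" by (simp add: isloop_def)
  then have x1: "x = {1}" using fx by simp
  have lp: "\<forall>e\<in>set (el u). isloop e \<longrightarrow> e = {1}"
  proof (intro ballI impI)
    fix e assume "e \<in> set (el u)" "isloop e"
    then have "e \<in> set (filter isloop (el u))" by simp
    then show "e = {1}" using fx x1 by simp
  qed
  have nlp: "\<forall>e\<in>set (el u). \<not> isloop e \<longrightarrow> 2 \<le> count_list (el u) e"
  proof (intro ballI impI)
    fix e assume e: "e \<in> set (el u)" "\<not> isloop e"
    then have "e \<in> edges (check u)" by (simp add: edges_el elc)
    then have "2 \<le> Nedge e (check u)" using u(6) by (simp add: wigner_word_def)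
    then show "2 \<le> count_list (el u) e" using e by (simp add: Nedge_el elc count_list_filter)
  qed
  have "2 * card (set u) = k + 1" using u(6,7) by (simp add: wigner_word_def supp_def check_def)
  with lp c1 nlp show ?thesis by simp
qed

lemma el_map: "el (map h w) = map (image h) (el w)"
  by (induction w rule: el.induct) auto



lemma word_equiv_refl: "word_equiv w w"
  unfolding word_equiv_def by (intro exI[of _ id]) auto

lemma word_equiv_sym: assumes "word_equiv w v" shows "word_equiv v w"
proof -
  obtain f where f: "bij_betw f (supp w) (supp v)" "map f w = v" using assms by (auto simp: word_equiv_def)
  define g where "g = the_inv_into (supp w) f"
  have "bij_betw g (supp v) (supp w)" unfolding g_def using f(1) by (rule bij_betw_the_inv_into)
  moreover have "map g v = w"
  proof -
    have "map g v = map (g \<circ> f) w" using f(2) by auto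
    also have "\<dots> = map id w"
      using f(1) by (intro map_cong) (auto simp: g_def supp_def bij_betw_def the_inv_into_f_f)
    finally show ?thesis by simp
  qed
  ultimately show ?thesis unfolding word_equiv_def by blast
qed

lemma word_equiv_trans: assumes "word_equiv w v" "word_equiv v x" shows "word_equiv w x"
proof -
  obtain f where f: "bij_betw f (supp w) (supp v)" "map f w = v" using assms by (auto simp: word_equiv_def)
  obtain g where g: "bij_betw g (supp v) (supp x)" "map g v = x" using assms by (auto simp: word_equiv_def)
  have "bij_betw (g \<circ> f) (supp w) (supp x)" using f g bij_betw_trans by blast
  moreover have "map (g \<circ> f) w = map g (map f w)" by simp
  then have "map (g \<circ> f) w = x" using f g by simp
  ultimately show ?thesis unfolding word_equiv_def by blast
qed

lemma equiv_words: "equiv UNIV {(w, v). word_equiv w v}"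
  by (rule equivI) (auto intro: refl_onI symI transI word_equiv_refl word_equiv_sym word_equiv_trans)

lemma shift_pair:
  assumes u: "u \<in> a_set k" and v: "v \<in> a_set k"
  shows "\<exists>w2. word_equiv v w2 \<and> good_pair k (u, w2)"
proof -
  define m where "m = Max (set u)"
  define h where "h x = (if x = 1 then 1 else x + m)" for x :: nat
  define w2 where "w2 = map h v"
  have U: "is_word u" "closed_word u" "length u = k + 1" "hd u = 1"
    using u by (auto simp: a_set_def)
  have W: "is_word v" "closed_word v" "length v = k + 1" "hd v = 1"
    using v by (auto simp: a_set_def)
  have PU: "(\<forall>e\<in>set (el u). isloop e \<longrightarrow> e = {1}) \<and> count_list (el u) {1} = 1
    \<and> (\<forall>e\<in>set (el u). \<not> isloop e \<longrightarrow> 2 \<le> count_list (el u) e) \<and> 2 * card (set u) = k + 1"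
    using aset_props[OF u] .
  have PV: "(\<forall>e\<in>set (el v). isloop e \<longrightarrow> e = {1}) \<and> count_list (el v) {1} = 1
    \<and> (\<forall>e\<in>set (el v). \<not> isloop e \<longrightarrow> 2 \<le> count_list (el v) e) \<and> 2 * card (set v) = k + 1"
    using aset_props[OF v] .
  have une: "u \<noteq> []" and vne: "v \<noteq> []" using U(2) W(2) by (auto simp: closed_word_def)
  have one_u: "1 \<in> set u" using une U(4) by (metis hd_in_set)
  have one_v: "1 \<in> set v" using vne W(4) by (metis hd_in_set)
  have m1: "1 \<le> m" unfolding m_def using one_u by (simp add: Max_ge)
  have posv: "\<forall>x\<in>set v. 0 < x" using W(1) by (simp add: is_word_def)
  have injh: "inj_on h (set v)"
    unfolding inj_on_def h_def using posv by auto
  have sw2: "set w2 = h ` set v" by (simp add: w2_def)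
  have eq: "word_equiv v w2"
    unfolding word_equiv_def supp_def
    by (intro exI[of _ h]) (simp add: w2_def bij_betw_imageI injh)
  have elw2: "el w2 = map (image h) (el v)" by (simp add: w2_def el_map)
  have injI: "inj_on (image h) (set (el v))"
    by (rule inj_on_image, rule inj_on_subset[OF injh]) (use el_subset in blast)
  have cnt: "count_list (el w2) (h ` e) = count_list (el v) e" if "e \<in> set (el v)" for e
    using count_list_inj_map[OF injI that] by (simp add: elw2)
  have h1: "h ` {1} = {1}" by (simp add: h_def)
  have one_el_u: "{1} \<in> set (el u)"
  proof (rule ccontr)
    assume "{1} \<notin> set (el u)" then have "count_list (el u) {1} = 0" by simp
    with PU show False by simp
  qed
  have one_el_v: "{1} \<in> set (el v)"
  proof (rule ccontr)
    assume "{1} \<notin> set (el v)" then have "count_list (el v) {1} = 0" by simp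
    with PV show False by simp
  qed
  have one_el_w2: "{1} \<in> set (el w2)" using one_el_v h1 elw2 by (metis image_eqI list.set_map)
  have c1w2: "count_list (el w2) {1} = 1" using cnt[OF one_el_v] h1 PV by simp
  have inter: "set u \<inter> set w2 = {1}"
  proof (intro equalityI subsetI)
    fix x assume "x \<in> set u \<inter> set w2"
    then obtain y where y: "y \<in> set v" "x = h y" "x \<in> set u" using sw2 by auto
    show "x \<in> {1}"
    proof (cases "y = 1")
      case True then show ?thesis using y by (simp add: h_def)
    next
      case False
      then have "x = y + m" using y by (simp add: h_def)
      moreover have "x \<le> m" unfolding m_def using y(3) by simp
      moreover have "0 < y" using posv y by simp
      ultimately show ?thesis by simp
    qed
  next
    fix x :: nat assume "x \<in> {1}"
    then show "x \<in> set u \<inter> set w2" using one_u one_v sw2 h1 by force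
  qed
  have "card (set w2) = card (set v)" using sw2 injh by (simp add: card_image)
  moreover have "card (set u) + card (set w2) = card (set u \<union> set w2) + card (set u \<inter> set w2)"
    by (rule card_Un_Int) auto
  ultimately have wt: "card (set u \<union> set w2) = k" using inter PU PV by simp
  have uV: "u \<in> V k" using U one_el_u by (auto simp: V_def edges_el)
  have w2V: "w2 \<in> V k"
  proof -
    have "is_word w2" using m1 by (auto simp: is_word_def w2_def h_def)
    moreover have "hd w2 = 1" using vne W(4) by (simp add: w2_def hd_map h_def)
    moreover have "last w2 = 1" using vne W(2,4) by (simp add: w2_def last_map h_def closed_word_def)
    moreover have "w2 \<noteq> []" using vne by (simp add: w2_def)
    moreover have "length w2 = k + 1" using W(3) by (simp add: w2_def)
    ultimately show ?thesis using one_el_w2 by (auto simp: V_def closed_word_def edges_el)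
  qed
  have clt: "weak_CLT_pair (u, w2)"
    unfolding weak_CLT_pair_def edges_pair_def Nedge_pair_def
  proof (intro conjI ballI)
    fix e assume "e \<in> edges (fst (u, w2)) \<union> edges (snd (u, w2))"
    then have "e \<in> set (el u) \<or> e \<in> set (el w2)" by (simp add: edges_el)
    then show "2 \<le> Nedge e (fst (u, w2)) + Nedge e (snd (u, w2))"
    proof
      assume e: "e \<in> set (el u)"
      show ?thesis
      proof (cases "isloop e")
        case True then have "e = {1}" using PU e by blast
        then show ?thesis using PU c1w2 by (simp add: Nedge_el)
      next
        case False then have "2 \<le> count_list (el u) e" using PU e by blast
        then show ?thesis by (simp add: Nedge_el)
      qed
    next
      assume "e \<in> set (el w2)"
      then obtain e' where e': "e' \<in> set (el v)" "e = h ` e'" using elw2 by auto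
      show ?thesis
      proof (cases "isloop e'")
        case True then have "e' = {1}" using PV e' by blast
        then have "e = {1}" using e' h1 by simp
        then show ?thesis using PU c1w2 by (simp add: Nedge_el)
      next
        case False then have "2 \<le> count_list (el v) e'" using PV e' by blast
        then show ?thesis using cnt[OF e'(1)] e' by (simp add: Nedge_el)
      qed
    qed
  next
    show "edges (fst (u, w2)) \<inter> edges (snd (u, w2)) \<noteq> {}"
      using one_el_u one_el_w2 by (auto simp: edges_el)
  qed
  have "good_pair k (u, w2)"
    using clt uV w2V wt by (simp add: good_pair_def wt_pair_def supp_def)
  with eq show ?thesis by blast
qed



lemma edge_minmax: "{Min {a, b :: nat}, Max {a, b}} = {a, b}"
  by (cases "a \<le> b") (auto simp: max_def min_def)

lemma prod_edges_integral:
  fixes M :: "'a measure" and X :: "nat \<Rightarrow> nat \<Rightarrow> 'a \<Rightarrow> real"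
  assumes P: "prob_space M"
    and indep: "prob_space.indep_vars M (\<lambda>_. borel) (\<lambda>(i, j). X i j) {(i, j). 1 \<le> i \<and> i \<le> j}"
    and moments: "\<And>i j n. 1 \<le> i \<Longrightarrow> i \<le> j \<Longrightarrow> integrable M (\<lambda>\<omega>. \<bar>X i j \<omega>\<bar> ^ n)"
    and fin: "finite A" and Ae: "\<forall>e\<in>A. \<exists>a b. e = {a, b} \<and> 0 < a \<and> 0 < b"
  shows "integral\<^sup>L M (\<lambda>\<omega>. \<Prod>e\<in>A. xi X e \<omega> ^ n e) = (\<Prod>e\<in>A. integral\<^sup>L M (\<lambda>\<omega>. xi X e \<omega> ^ n e))"
proof -
  define I where "I = {(i, j). 1 \<le> i \<and> i \<le> (j::nat)}"
  define g where "g e = (Min e, Max e)" for e :: "nat set"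
  define J where "J = g ` A"
  define Y where "Y p = (\<lambda>x::real. x ^ n {fst p, snd p}) \<circ> (\<lambda>(i, j). X i j) p" for p
  have ge: "{fst (g e), snd (g e)} = e" if "e \<in> A" for e
    using Ae that by (auto simp: g_def edge_minmax)
  have ge': "{Min e, Max e} = e" if "e \<in> A" for e using ge[OF that] by (simp add: g_def)
  have injg: "inj_on g A" by (metis ge inj_onI)
  have JI: "J \<subseteq> I"
  proof
    fix p assume "p \<in> J"
    then obtain e where "e \<in> A" "p = g e" by (auto simp: J_def)
    then obtain a b where "e = {a, b}" "0 < a" "0 < b" "p = g e" using Ae by blast
    then show "p \<in> I" by (auto simp: I_def g_def min_def max_def)
  qed
  have ind: "prob_space.indep_vars M (\<lambda>_. borel) Y J"
    unfolding Y_def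
    by (rule prob_space.indep_vars_compose[OF P prob_space.indep_vars_subset[OF P indep[folded I_def] JI]]) auto
  have meas: "X i j \<in> borel_measurable M" if "(i, j) \<in> I" for i j
    using indep[folded I_def] that P unfolding prob_space.indep_vars_def[OF P] by fastforce
  have intY: "integrable M (Y p)" if "p \<in> J" for p
  proof -
    obtain i j where p: "p = (i, j)" by force
    with that JI have ij: "(i, j) \<in> I" by auto
    then have "integrable M (\<lambda>\<omega>. \<bar>X i j \<omega>\<bar> ^ n {i, j})" using moments by (auto simp: I_def)
    then have "integrable M (\<lambda>\<omega>. \<bar>X i j \<omega> ^ n {i, j}\<bar>)" by (simp add: power_abs)
    then have "integrable M (\<lambda>\<omega>. X i j \<omega> ^ n {i, j})"
      using integrable_abs_iff[of "\<lambda>\<omega>. X i j \<omega> ^ n {i, j}" M] meas[OF ij] by simp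
    then show ?thesis by (simp add: Y_def p comp_def)
  qed
  have eqY: "(\<Prod>e\<in>A. xi X e \<omega> ^ n e) = (\<Prod>p\<in>J. Y p \<omega>)" for \<omega>
  proof -
    have "(\<Prod>p\<in>J. Y p \<omega>) = (\<Prod>e\<in>A. Y (g e) \<omega>)" unfolding J_def using injg by (simp add: prod.reindex)
    also have "\<dots> = (\<Prod>e\<in>A. xi X e \<omega> ^ n e)"
      by (intro prod.cong refl) (simp add: Y_def ge' xi_def g_def)
    finally show ?thesis by simp
  qed
  have "integral\<^sup>L M (\<lambda>\<omega>. \<Prod>e\<in>A. xi X e \<omega> ^ n e) = integral\<^sup>L M (\<lambda>\<omega>. \<Prod>p\<in>J. Y p \<omega>)"
    by (simp add: eqY)
  also have "\<dots> = (\<Prod>p\<in>J. integral\<^sup>L M (Y p))"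
    using prob_space.indep_vars_lebesgue_integral[OF P _ ind intY] fin by (simp add: J_def)
  also have "\<dots> = (\<Prod>e\<in>A. integral\<^sup>L M (Y (g e)))" unfolding J_def using injg by (simp add: prod.reindex)
  also have "\<dots> = (\<Prod>e\<in>A. integral\<^sup>L M (\<lambda>\<omega>. xi X e \<omega> ^ n e))"
    by (intro prod.cong refl arg_cong[where f="integral\<^sup>L M"] ext) (simp add: Y_def ge' xi_def g_def)
  finally show ?thesis .
qed



lemma el_form: "e \<in> set (el w) \<Longrightarrow> \<exists>a b. e = {a, b} \<and> a \<in> set w \<and> b \<in> set w"
  by (induction w rule: el.induct) auto

lemma edges_pos: "is_word w \<Longrightarrow> \<forall>e\<in>edges w. \<exists>a b. e = {a, b} \<and> 0 < a \<and> 0 < b"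
  unfolding edges_el is_word_def by (metis el_form)

lemma count1_in: "count_list xs x = Suc n \<Longrightarrow> x \<in> set xs"
  by (metis count_notin nat.distinct(1))

lemma T_extend:
  assumes "finite A" "edges w \<subseteq> A"
  shows "T X w \<omega> = (\<Prod>e\<in>A. xi X e \<omega> ^ Nedge e w)"
  unfolding T_def
proof (rule prod.mono_neutral_left[OF assms])
  show "\<forall>i\<in>A - edges w. xi X i \<omega> ^ Nedge i w = 1"
    by (auto simp: Nedge_el edges_el)
qed

lemma pair_expect:
  fixes M :: "'a measure" and X :: "nat \<Rightarrow> nat \<Rightarrow> 'a \<Rightarrow> real" and k :: nat
  assumes P: "prob_space M"
    and indep: "prob_space.indep_vars M (\<lambda>_. borel) (\<lambda>(i, j). X i j) {(i, j). 1 \<le> i \<and> i \<le> j}"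
    and off_id: "\<And>i j. 1 \<le> i \<Longrightarrow> i < j \<Longrightarrow> distr M borel (X i j) = distr M borel (X 1 2)"
    and mean0: "\<And>i j. 1 \<le> i \<Longrightarrow> i \<le> j \<Longrightarrow> integral\<^sup>L M (X i j) = 0"
    and var1: "integral\<^sup>L M (\<lambda>\<omega>. (X 1 2 \<omega>)\<^sup>2) = 1"
    and moments: "\<And>i j n. 1 \<le> i \<Longrightarrow> i \<le> j \<Longrightarrow> integrable M (\<lambda>\<omega>. \<bar>X i j \<omega>\<bar> ^ n)"
    and g: "good_pair k (w1, w2)" and k3: "3 \<le> k"
  shows "integral\<^sup>L M (\<lambda>\<omega>. Tbar M X w1 \<omega> * Tbar M X w2 \<omega>) = integral\<^sup>L M (\<lambda>\<omega>. (X 1 1 \<omega>)\<^sup>2)"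
proof -
  have c11: "count_list (el w1) {1} = 1" and c21: "count_list (el w2) {1} = 1"
    and lp1: "\<forall>e\<in>set (el w1). isloop e \<longrightarrow> e = {1}" and lp2: "\<forall>e\<in>set (el w2). isloop e \<longrightarrow> e = {1}"
    and nl1: "\<forall>e\<in>set (el w1). \<not> isloop e \<longrightarrow> count_list (el w1) e = 2 \<and> e \<notin> set (el w2)"
    and nl2: "\<forall>e\<in>set (el w2). \<not> isloop e \<longrightarrow> count_list (el w2) e = 2 \<and> e \<notin> set (el w1)"
    using good_struct[OF g k3] by blast+
  have w1V: "w1 \<in> V k" and w2V: "w2 \<in> V k" using g by (auto simp: good_pair_def)
  have iw1: "is_word w1" and iw2: "is_word w2" using w1V w2V by (auto simp: V_def)
  have meas: "X i j \<in> borel_measurable M" if "1 \<le> i" "i \<le> j" for i j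
    using indep that P unfolding prob_space.indep_vars_def[OF P] by fastforce
  have sq: "integral\<^sup>L M (\<lambda>\<omega>. X i j \<omega> ^ 2) = 1" if "1 \<le> i" "i < j" for i j
  proof -
    have "integral\<^sup>L M (\<lambda>\<omega>. X i j \<omega> ^ 2) = integral\<^sup>L (distr M borel (X i j)) (\<lambda>x. x ^ 2)"
      using meas[of i j] that by (simp add: integral_distr)
    also have "\<dots> = integral\<^sup>L (distr M borel (X 1 2)) (\<lambda>x. x ^ 2)" by (simp only: off_id[OF that])
    also have "\<dots> = integral\<^sup>L M (\<lambda>\<omega>. X 1 2 \<omega> ^ 2)"
      using meas[of 1 2] by (simp add: integral_distr)
    finally show ?thesis using var1 by simp
  qed
  have ET: "integral\<^sup>L M (T X w) = 0" if wV: "w \<in> V k" and c: "count_list (el w) {1} = 1" for w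
  proof -
    have iw: "is_word w" using wV by (simp add: V_def)
    have "{1} \<in> edges w" using count1_in[of "el w" "{1}" 0] c by (simp add: edges_el)
    moreover have "integral\<^sup>L M (\<lambda>\<omega>. xi X {1} \<omega> ^ Nedge {1} w) = 0"
      using c mean0[of 1 1] by (simp add: Nedge_el xi_def)
    ultimately have "(\<Prod>e\<in>edges w. integral\<^sup>L M (\<lambda>\<omega>. xi X e \<omega> ^ Nedge e w)) = 0"
      by (intro prod_zero) (auto simp: edges_el)
    moreover have "integral\<^sup>L M (T X w) = (\<Prod>e\<in>edges w. integral\<^sup>L M (\<lambda>\<omega>. xi X e \<omega> ^ Nedge e w))"
      unfolding T_def
      by (rule prod_edges_integral[OF P indep moments]) (auto simp: edges_el edges_pos[OF iw])
    ultimately show ?thesis by simp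
  qed
  have Tb1: "Tbar M X w1 = T X w1" using ET[OF w1V c11] by (simp add: Tbar_def)
  have Tb2: "Tbar M X w2 = T X w2" using ET[OF w2V c21] by (simp add: Tbar_def)
  define E where "E = edges w1 \<union> edges w2"
  define N where "N e = Nedge e w1 + Nedge e w2" for e
  have finE: "finite E" by (simp add: E_def edges_el)
  have prodT: "T X w1 \<omega> * T X w2 \<omega> = (\<Prod>e\<in>E. xi X e \<omega> ^ N e)" for \<omega>
    using T_extend[OF finE, of w1 X \<omega>] T_extend[OF finE, of w2 X \<omega>]
    by (simp add: E_def N_def power_add prod.distrib)
  have Epos: "\<forall>e\<in>E. \<exists>a b. e = {a, b} \<and> 0 < a \<and> 0 < b"
    using edges_pos[OF iw1] edges_pos[OF iw2] by (auto simp: E_def)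
  have "integral\<^sup>L M (\<lambda>\<omega>. Tbar M X w1 \<omega> * Tbar M X w2 \<omega>) = integral\<^sup>L M (\<lambda>\<omega>. \<Prod>e\<in>E. xi X e \<omega> ^ N e)"
    by (simp add: Tb1 Tb2 prodT)
  also have "\<dots> = (\<Prod>e\<in>E. integral\<^sup>L M (\<lambda>\<omega>. xi X e \<omega> ^ N e))"
    by (rule prod_edges_integral[OF P indep moments finE Epos])
  also have "\<dots> = integral\<^sup>L M (\<lambda>\<omega>. xi X {1} \<omega> ^ N {1}) * (\<Prod>e\<in>E - {{1}}. integral\<^sup>L M (\<lambda>\<omega>. xi X e \<omega> ^ N e))"
  proof -
    have "{1} \<in> E" using c11 count1_in[of "el w1" "{1}" 0] by (simp add: E_def edges_el)
    then show ?thesis using finE by (simp add: prod.remove)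
  qed
  also have "(\<Prod>e\<in>E - {{1}}. integral\<^sup>L M (\<lambda>\<omega>. xi X e \<omega> ^ N e)) = (\<Prod>e\<in>E - {{1}}. 1)"
  proof (rule prod.cong[OF refl])
    fix e assume e: "e \<in> E - {{1}}"
    then have nle: "\<not> isloop e" using lp1 lp2 by (auto simp: E_def edges_el)
    have N2: "N e = 2"
    proof (cases "e \<in> set (el w1)")
      case True then show ?thesis using nl1 nle by (simp add: N_def Nedge_el)
    next
      case False then have "e \<in> set (el w2)" using e by (auto simp: E_def edges_el)
      then show ?thesis using nl2 nle False by (simp add: N_def Nedge_el)
    qed
    obtain a b where ab: "e = {a, b}" "0 < a" "0 < b" using Epos e by blast
    then have "a \<noteq> b" using nle by (auto simp: isloop_def)
    then have mm: "Min e < Max e" "1 \<le> Min e" using ab by (auto simp: min_def max_def)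
    show "integral\<^sup>L M (\<lambda>\<omega>. xi X e \<omega> ^ N e) = 1"
      using sq[OF mm(2) mm(1)] N2 by (simp add: xi_def)
  qed
  also have "N {1} = 2" using c11 c21 by (simp add: N_def Nedge_el)
  finally show ?thesis by (simp add: xi_def)
qed

lemma combine:
  assumes e1: "word_equiv w1 v1" and e2: "word_equiv w2 v2"
    and i1: "set w1 \<inter> set w2 = {1}" and i2: "set v1 \<inter> set v2 = {1}"
    and h: "hd w1 = 1" "hd w2 = 1" "hd v1 = 1" "hd v2 = 1" "w1 \<noteq> []" "w2 \<noteq> []"
  shows "pair_equiv (w1, w2) (v1, v2)"
proof -
  obtain f1 where f1: "bij_betw f1 (set w1) (set v1)" "map f1 w1 = v1" using e1 by (auto simp: word_equiv_def supp_def)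
  obtain f2 where f2: "bij_betw f2 (set w2) (set v2)" "map f2 w2 = v2" using e2 by (auto simp: word_equiv_def supp_def)
  have "hd (map f1 w1) = f1 (hd w1)" using h(5) by (rule hd_map)
  then have f11: "f1 1 = 1" using f1(2) h(1,3) by simp
  have "hd (map f2 w2) = f2 (hd w2)" using h(6) by (rule hd_map)
  then have f21: "f2 1 = 1" using f2(2) h(2,4) by simp
  define f where "f x = (if x \<in> set w1 then f1 x else f2 x)" for x
  have ff1: "\<forall>x\<in>set w1. f x = f1 x" by (simp add: f_def)
  have ff2: "\<forall>x\<in>set w2. f x = f2 x"
  proof
    fix x assume x2: "x \<in> set w2"
    show "f x = f2 x"
    proof (cases "x \<in> set w1")
      case True
      then have "x \<in> set w1 \<inter> set w2" using x2 by simp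
      then have "x = 1" using i1 by blast
      then show ?thesis using True f11 f21 by (simp add: f_def)
    next
      case False then show ?thesis by (simp add: f_def)
    qed
  qed
  have im: "f ` (set w1 \<union> set w2) = set v1 \<union> set v2"
  proof -
    have "f ` set w1 = f1 ` set w1" using ff1 by (intro image_cong) auto
    moreover have "f ` set w2 = f2 ` set w2" using ff2 by (intro image_cong) auto
    ultimately show ?thesis using f1 f2 by (simp add: image_Un bij_betw_def)
  qed
  have inj: "inj_on f (set w1 \<union> set w2)"
  proof (rule inj_onI)
    fix x y assume x: "x \<in> set w1 \<union> set w2" and y: "y \<in> set w1 \<union> set w2" and fxy: "f x = f y"
    have inj1: "inj_on f1 (set w1)" and inj2: "inj_on f2 (set w2)" using f1 f2 by (auto simp: bij_betw_def)
    have one1: "1 \<in> set w1" and one2: "1 \<in> set w2" using i1 by auto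
    have cross: "x = y" if a: "x \<in> set w1" "y \<in> set w2" "f x = f y" for x y
    proof -
      have "f x \<in> set v1" using a(1) ff1 bij_betw_apply[OF f1(1) a(1)] by simp
      moreover have "f y \<in> set v2" using a(2) ff2 bij_betw_apply[OF f2(1) a(2)] by simp
      ultimately have "f x \<in> set v1 \<inter> set v2" using a(3) by simp
      then have fx1: "f x = 1" using i2 by blast
      have "f1 x = f1 1" using fx1 a(1) ff1 f11 by simp
      then have "x = 1" using inj_onD[OF inj1 _ a(1) one1] by simp
      moreover have "f2 y = f2 1" using fx1 a(2,3) ff2 f21 by simp
      then have "y = 1" using inj_onD[OF inj2 _ a(2) one2] by simp
      ultimately show ?thesis by simp
    qed
    show "x = y"
    proof (cases "x \<in> set w1")
      case xin: True
      show ?thesis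
      proof (cases "y \<in> set w1")
        case True then show ?thesis using xin fxy ff1 inj1 by (auto dest: inj_onD)
      next
        case False then show ?thesis using xin y fxy cross by auto
      qed
    next
      case xn: False
      then have x2: "x \<in> set w2" using x by auto
      show ?thesis
      proof (cases "y \<in> set w2")
        case True then show ?thesis using x2 fxy ff2 inj2 by (auto dest: inj_onD)
      next
        case False then have "y \<in> set w1" using y by auto
        then show ?thesis using x2 fxy cross by force
      qed
    qed
  qed
  have "map f w1 = map f1 w1" by (rule map_cong[OF refl]) (use ff1 in blast)
  then have m1: "map f w1 = v1" using f1(2) by simp
  have "map f w2 = map f2 w2" by (rule map_cong[OF refl]) (use ff2 in blast)
  then have m2: "map f w2 = v2" using f2(2) by simp
  note m1 m2
  then show ?thesis unfolding pair_equiv_def supp_def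
    using inj im by (intro exI[of _ f]) (simp add: bij_betw_def)
qed



lemma good_part1:
  assumes g: "good_pair k (w1, w2)" and k3: "3 \<le> k"
  shows "(Nedge {1} w1 = 1 \<and> wigner_word (check w1) \<and> length (check w1) = k) \<and>
         (Nedge {1} w2 = 1 \<and> wigner_word (check w2) \<and> length (check w2) = k) \<and>
         supp w1 \<inter> supp w2 = {1}"
proof -
  have c11: "count_list (el w1) {1} = 1" and c21: "count_list (el w2) {1} = 1"
    and lp1: "\<forall>e\<in>set (el w1). isloop e \<longrightarrow> e = {1}" and lp2: "\<forall>e\<in>set (el w2). isloop e \<longrightarrow> e = {1}"
    and nl1: "\<forall>e\<in>set (el w1). \<not> isloop e \<longrightarrow> count_list (el w1) e = 2 \<and> e \<notin> set (el w2)"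
    and nl2: "\<forall>e\<in>set (el w2). \<not> isloop e \<longrightarrow> count_list (el w2) e = 2 \<and> e \<notin> set (el w1)"
    and inter: "set w1 \<inter> set w2 = {1}"
    and cd1: "2 * card (set w1) = k + 1" and cd2: "2 * card (set w2) = k + 1"
    using good_struct[OF g k3] by blast+
  have w1V: "w1 \<in> V k" and w2V: "w2 \<in> V k" using g by (auto simp: good_pair_def)
  have W1: "is_word w1" "closed_word w1" "length w1 = k + 1" using w1V by (auto simp: V_def)
  have W2: "is_word w2" "closed_word w2" "length w2 = k + 1" using w2V by (auto simp: V_def)
  have nl1': "\<forall>e\<in>set (el w1). \<not> isloop e \<longrightarrow> count_list (el w1) e = 2" using nl1 by blast
  have nl2': "\<forall>e\<in>set (el w2). \<not> isloop e \<longrightarrow> count_list (el w2) e = 2" using nl2 by blast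
  have P1: "length (check w1) = length w1 - 1 \<and> wigner_word (check w1)"
    by (rule check_props[OF W1(1,2) lp1 c11 nl1']) (simp add: cd1 W1(3))
  have P2: "length (check w2) = length w2 - 1 \<and> wigner_word (check w2)"
    by (rule check_props[OF W2(1,2) lp2 c21 nl2']) (simp add: cd2 W2(3))
  show ?thesis using P1 P2 W1(3) W2(3) c11 c21 inter by (simp add: Nedge_el supp_def)
qed

lemma good_aset:
  assumes g: "good_pair k (w1, w2)" and k3: "3 \<le> k"
  shows "w1 \<in> a_set k" "w2 \<in> a_set k"
proof -
  have w1V: "w1 \<in> V k" and w2V: "w2 \<in> V k" using g by (auto simp: good_pair_def)
  show "w1 \<in> a_set k" "w2 \<in> a_set k"
    using good_part1[OF g k3] w1V w2V by (auto simp: a_set_def V_def)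
qed

theorem mainTheorem16:
  fixes M :: "'a measure" and X :: "nat \<Rightarrow> nat \<Rightarrow> 'a \<Rightarrow> real" and k :: nat
  assumes "prob_space M"
    and indep: "prob_space.indep_vars M (\<lambda>_. borel) (\<lambda>(i, j). X i j) {(i, j). 1 \<le> i \<and> i \<le> j}"
    and diag_id: "\<And>i. 1 \<le> i \<Longrightarrow> distr M borel (X i i) = distr M borel (X 1 1)"
    and off_id: "\<And>i j. 1 \<le> i \<Longrightarrow> i < j \<Longrightarrow> distr M borel (X i j) = distr M borel (X 1 2)"
    and mean0: "\<And>i j. 1 \<le> i \<Longrightarrow> i \<le> j \<Longrightarrow> integral\<^sup>L M (X i j) = 0"
    and var1: "integral\<^sup>L M (\<lambda>\<omega>. (X 1 2 \<omega>)\<^sup>2) = 1"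
    and moments: "\<And>i j n. 1 \<le> i \<Longrightarrow> i \<le> j \<Longrightarrow> integrable M (\<lambda>\<omega>. \<bar>X i j \<omega>\<bar> ^ n)"
    and "odd k" and "3 \<le> k"
  shows "(\<forall>w1 w2. good_pair k (w1, w2) \<longrightarrow>
            (Nedge {1} w1 = 1 \<and> wigner_word (check w1) \<and> length (check w1) = k) \<and>
            (Nedge {1} w2 = 1 \<and> wigner_word (check w2) \<and> length (check w2) = k) \<and>
            supp w1 \<inter> supp w2 = {1} \<and>
            integral\<^sup>L M (\<lambda>\<omega>. Tbar M X w1 \<omega> * Tbar M X w2 \<omega>)
              = integral\<^sup>L M (\<lambda>\<omega>. (X 1 1 \<omega>)\<^sup>2))
       \<and> (\<forall>R. R \<subseteq> {a. good_pair k a} \<and> (\<forall>a. good_pair k a \<longrightarrow> (\<exists>!r\<in>R. pair_equiv a r)) \<longrightarrow>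
            (\<Sum>(w1, w2)\<in>R. integral\<^sup>L M (\<lambda>\<omega>. Tbar M X w1 \<omega> * Tbar M X w2 \<omega>))
              = (real (a_num k))\<^sup>2 * integral\<^sup>L M (\<lambda>\<omega>. (X 1 1 \<omega>)\<^sup>2))"
proof -
  note P = assms(1) and k3 = assms(9)
  define c where "c = integral\<^sup>L M (\<lambda>\<omega>. (X 1 1 \<omega>)\<^sup>2)"
  have EX: "integral\<^sup>L M (\<lambda>\<omega>. Tbar M X w1 \<omega> * Tbar M X w2 \<omega>) = c" if "good_pair k (w1, w2)" for w1 w2
    unfolding c_def by (rule pair_expect[OF P indep off_id mean0 var1 moments that k3])
  have part1: "\<forall>w1 w2. good_pair k (w1, w2) \<longrightarrow>
            (Nedge {1} w1 = 1 \<and> wigner_word (check w1) \<and> length (check w1) = k) \<and>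
            (Nedge {1} w2 = 1 \<and> wigner_word (check w2) \<and> length (check w2) = k) \<and>
            supp w1 \<inter> supp w2 = {1} \<and>
            integral\<^sup>L M (\<lambda>\<omega>. Tbar M X w1 \<omega> * Tbar M X w2 \<omega>) = c"
    using good_part1[OF _ k3] EX by blast
  have part2: "(\<Sum>(w1, w2)\<in>R. integral\<^sup>L M (\<lambda>\<omega>. Tbar M X w1 \<omega> * Tbar M X w2 \<omega>)) = (real (a_num k))\<^sup>2 * c"
    if R: "R \<subseteq> {a. good_pair k a}" and U: "\<forall>a. good_pair k a \<longrightarrow> (\<exists>!r\<in>R. pair_equiv a r)" for R
  proof -
    define wr where "wr = {(w, v). word_equiv w v}"
    define Q where "Q = a_set k // wr"
    define \<phi> where "\<phi> r = (wr `` {fst r}, wr `` {snd r})" for r :: "nat list \<times> nat list"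
    have eqv: "equiv UNIV wr" unfolding wr_def by (rule equiv_words)
    have cls: "wr `` {x} = wr `` {y} \<longleftrightarrow> word_equiv x y" for x y
      using eq_equiv_class_iff[OF eqv] by (simp add: wr_def)
    have pe_refl: "pair_equiv a a" for a
      unfolding pair_equiv_def by (intro exI[of _ id]) auto
    have inj: "inj_on \<phi> R"
    proof (rule inj_onI)
      fix r r' assume r: "r \<in> R" and r': "r' \<in> R" and eq: "\<phi> r = \<phi> r'"
      obtain w1 w2 where rr: "r = (w1, w2)" by force
      obtain v1 v2 where rr': "r' = (v1, v2)" by force
      have g1: "good_pair k (w1, w2)" and g2: "good_pair k (v1, v2)" using R r r' rr rr' by auto
      have "word_equiv w1 v1" "word_equiv w2 v2" using eq cls by (auto simp: \<phi>_def rr rr')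
      moreover have "set w1 \<inter> set w2 = {1}" "set v1 \<inter> set v2 = {1}"
        using good_part1[OF g1 k3] good_part1[OF g2 k3] by (auto simp: supp_def)
      moreover have "hd w1 = 1" "hd w2 = 1" "hd v1 = 1" "hd v2 = 1" "w1 \<noteq> []" "w2 \<noteq> []"
        using g1 g2 by (auto simp: good_pair_def V_def closed_word_def)
      ultimately have "pair_equiv (w1, w2) (v1, v2)" by (rule combine)
      moreover have "pair_equiv (w1, w2) (w1, w2)" by (rule pe_refl)
      moreover have "\<exists>!r\<in>R. pair_equiv (w1, w2) r" using U g1 by blast
      ultimately show "r = r'" using r r' rr rr' by blast
    qed
    have img: "\<phi> ` R = Q \<times> Q"
    proof (intro equalityI subsetI)
      fix q assume "q \<in> \<phi> ` R"
      then obtain w1 w2 where r: "(w1, w2) \<in> R" "q = \<phi> (w1, w2)" by force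
      have g1: "good_pair k (w1, w2)" using R r by auto
      show "q \<in> Q \<times> Q" using good_aset[OF g1 k3] r by (auto simp: \<phi>_def Q_def quotientI)
    next
      fix q assume "q \<in> Q \<times> Q"
      then obtain u v where uv: "u \<in> a_set k" "v \<in> a_set k" "q = (wr `` {u}, wr `` {v})"
        unfolding Q_def by (auto elim!: quotientE)
      obtain w2 where w2: "word_equiv v w2" "good_pair k (u, w2)" using shift_pair[OF uv(1,2)] by blast
      then obtain r where r: "r \<in> R" "pair_equiv (u, w2) r" using U by blast
      obtain r1 r2 where rr: "r = (r1, r2)" by force
      obtain f where f: "bij_betw f (supp u \<union> supp w2) (supp r1 \<union> supp r2)" "map f u = r1" "map f w2 = r2"
        using r(2) rr by (auto simp: pair_equiv_def)
      have inj_f: "inj_on f (supp u \<union> supp w2)" using f(1) by (simp add: bij_betw_def)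
      have "word_equiv u r1" unfolding word_equiv_def
        by (intro exI[of _ f] conjI bij_betw_imageI inj_on_subset[OF inj_f])
           (use f(2) in \<open>auto simp: supp_def\<close>)
      moreover have "word_equiv w2 r2" unfolding word_equiv_def
        by (intro exI[of _ f] conjI bij_betw_imageI inj_on_subset[OF inj_f])
           (use f(3) in \<open>auto simp: supp_def\<close>)
      ultimately have "word_equiv v r2" "word_equiv u r1"
        using w2(1) word_equiv_trans by blast+
      then have "word_equiv r1 u" "word_equiv r2 v" using word_equiv_sym by blast+
      then have "\<phi> r = q" using uv(3) cls rr by (simp add: \<phi>_def)
      then show "q \<in> \<phi> ` R" using r(1) by blast
    qed
    have "bij_betw \<phi> R (Q \<times> Q)" using inj img by (simp add: bij_betw_def)
    then have cardR: "card R = card Q * card Q"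
      using bij_betw_same_card card_cartesian_product by metis
    have "(\<Sum>(w1, w2)\<in>R. integral\<^sup>L M (\<lambda>\<omega>. Tbar M X w1 \<omega> * Tbar M X w2 \<omega>)) = (\<Sum>r\<in>R. c)"
    proof (rule sum.cong[OF refl])
      fix r assume "r \<in> R"
      then have "good_pair k r" using R by auto
      then show "(case r of (w1, w2) \<Rightarrow> integral\<^sup>L M (\<lambda>\<omega>. Tbar M X w1 \<omega> * Tbar M X w2 \<omega>)) = c"
        using EX by (cases r) auto
    qed
    also have "\<dots> = real (card R) * c" by simp
    also have "\<dots> = (real (a_num k))\<^sup>2 * c" using cardR by (simp add: a_num_def Q_def wr_def power2_eq_square)
    finally show ?thesis .
  qed
  show ?thesis using part1 part2 unfolding c_def by blast
qed


end
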